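(* Let $\mathcal{A}$ be a synchronizing automaton with Wedderburn–Artin components indexed by $[1,k]$ as in the context. Then $\mathrm{Fr}(\mathcal{A})\le\min\{\mathrm{Rnk}(\mathcal{I}_i): i\in[1,k]\}$. Moreover, if $\mathrm{Fs}(\mathcal{A})\setminus\mathrm{Rad}(\mathcal{A})\neq\emptyset$, then $\min\{\mathrm{Rnk}(\mathcal{I}_i): i\in[1,k]\}=\mathrm{Fr}(\mathcal{A})$.
   Context: Let $\mathcal{A}=\langle Q,\Sigma,\delta\rangle$ be a synchronizing automaton with state set $Q=\{q_1,\dots,q_n\}$ and finite alphabet $\Sigma$; write $q\cdot u$ for the action of $u\in\Sigma^*$, extended to subsets. A word $u$ is reset if $|Q\cdot u|=1$; $\mathrm{Syn}(\mathcal{A})$ is the set of reset words. The rank of a word is $\mathrm{rk}(u)=|Q\cdot u|$. Each word $u$ acts linearly on $\mathbb{C}Q$ by $q\mapsto q\cdot u$, preserving $w^\perp=\{x:\langle x,w\rangle=0\}$ with $w=q_1+\dots+q_n$; $u$ is reset iff it acts as $0$ on $w^\perp$. Let $\rho:\Sigma^*\to\mathbb{M}_{n-1}(\mathbb{C})\cong\mathrm{End}(w^\perp)$ be the induced representation, $\mathcal{R}$ the $\mathbb{C}$-algebra generated by $\rho(\Sigma^* )$, and $\mathrm{Rad}(\mathcal{A})=\rho^{-1}(\mathrm{Rad}(\mathcal{R}))$ the set of radical words (Jacobson radical). By Wedderburn–Artin, $\mathcal{R}/\mathrm{Rad}(\mathcal{R})\cong\mathbb{M}_{n_1}(\mathbb{C})\times\dots\times\mathbb{M}_{n_k}(\mathbb{C})$;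 let $\psi:\mathcal{R}\to\mathcal{R}/\mathrm{Rad}(\mathcal{R})$ be the quotient map, $\varphi_i$ the projection onto the $i$-th factor, and $\theta_i=\varphi_i\circ\psi\circ\rho:\Sigma^*\to\mathbb{M}_{n_i}(\mathbb{C})$, with $0_i$ the zero matrix. A word $u$ is radical iff $\theta_i(u)=0_i$ for all $i$. The monoid $\mathcal{M}_i=\theta_i(\Sigma^* )$ has a unique $0$-minimal ideal $\mathcal{I}_i$. For $g\in\mathcal{I}_i\setminus\{0_i\}$ put $\mathrm{Rnk}_i(g)=\min\{\mathrm{rk}(u):\theta_i(u)=g\}$ and $\mathrm{Rnk}(\mathcal{I}_i)=\min\{\mathrm{Rnk}_i(g): g\in\mathcal{I}_i\setminus\{0_i\}\}$. The former-rank is $\mathrm{Fr}(\mathcal{A})=\min\{|Q\cdot u|:u\in\Sigma^*\setminus\mathrm{Syn}(\mathcal{A})\}$ and the set of former-synchronizing words is $\mathrm{Fs}(\mathcal{A})=\{u\in\Sigma^*:|Q\cdot u|=\mathrm{Fr}(\mathcal{A})\}$. *)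

theory Defs
  imports Complex_Main "Jordan_Normal_Form.Matrix"
begin

text \<open>Automaton: states are 0..n-1, alphabet is a finite type, transition delta.
  Right action of a word: q . u.\<close>

definition act :: "(nat \<Rightarrow> 'a \<Rightarrow> nat) \<Rightarrow> nat \<Rightarrow> 'a list \<Rightarrow> nat" where
  "act \<delta> q u = foldl \<delta> q u"

definition rk :: "nat \<Rightarrow> (nat \<Rightarrow> 'a \<Rightarrow> nat) \<Rightarrow> 'a list \<Rightarrow> nat" where
  "rk n \<delta> u = card ((\<lambda>q. act \<delta> q u) ` {..<n})"

definition is_reset :: "nat \<Rightarrow> (nat \<Rightarrow> 'a \<Rightarrow> nat) \<Rightarrow> 'a list \<Rightarrow> bool" where
  "is_reset n \<delta> u \<longleftrightarrow> rk n \<delta> u = 1"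

definition synchronizing :: "nat \<Rightarrow> (nat \<Rightarrow> 'a \<Rightarrow> nat) \<Rightarrow> bool" where
  "synchronizing n \<delta> \<longleftrightarrow> (\<exists>u. is_reset n \<delta> u)"

definition Fr :: "nat \<Rightarrow> (nat \<Rightarrow> 'a \<Rightarrow> nat) \<Rightarrow> nat" where
  "Fr n \<delta> = Inf {rk n \<delta> u | u. \<not> is_reset n \<delta> u}"

definition Fs :: "nat \<Rightarrow> (nat \<Rightarrow> 'a \<Rightarrow> nat) \<Rightarrow> 'a list set" where
  "Fs n \<delta> = {u. rk n \<delta> u = Fr n \<delta>}"

text \<open>The representation rho on w-perp (w = q_0 + ... + q_(n-1)), written as an
  (n-1) x (n-1) matrix w.r.t. the basis b_j = q_j - q_(n-1), j < n-1,
  acting on column coordinate vectors: b_j is sent to q_j.u - q_(n-1).u.\<close>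
definition rho :: "nat \<Rightarrow> (nat \<Rightarrow> 'a \<Rightarrow> nat) \<Rightarrow> 'a list \<Rightarrow> complex mat" where
  "rho n \<delta> u = mat (n - 1) (n - 1)
     (\<lambda>(i, j). (if i = act \<delta> j u then 1 else 0) - (if i = act \<delta> (n - 1) u then 1 else 0))"

inductive_set alg_gen :: "nat \<Rightarrow> complex mat set \<Rightarrow> complex mat set"
  for d :: nat and S :: "complex mat set" where
  gen: "x \<in> S \<Longrightarrow> x \<in> alg_gen d S"
| one: "1\<^sub>m d \<in> alg_gen d S"
| zero: "0\<^sub>m d d \<in> alg_gen d S"
| add: "x \<in> alg_gen d S \<Longrightarrow> y \<in> alg_gen d S \<Longrightarrow> x + y \<in> alg_gen d S"
| mult: "x \<in> alg_gen d S \<Longrightarrow> y \<in> alg_gen d S \<Longrightarrow> x * y \<in> alg_gen d S"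
| smult: "x \<in> alg_gen d S \<Longrightarrow> c \<cdot>\<^sub>m x \<in> alg_gen d S"

definition Ralg :: "nat \<Rightarrow> (nat \<Rightarrow> 'a \<Rightarrow> nat) \<Rightarrow> complex mat set" where
  "Ralg n \<delta> = alg_gen (n - 1) (range (rho n \<delta>))"

definition jac_rad :: "nat \<Rightarrow> complex mat set \<Rightarrow> complex mat set" where
  "jac_rad d R = {x \<in> R. \<forall>y\<in>R. \<exists>z\<in>R. z * (1\<^sub>m d - y * x) = 1\<^sub>m d}"

definition Rad_words :: "nat \<Rightarrow> (nat \<Rightarrow> 'a \<Rightarrow> nat) \<Rightarrow> 'a list set" where
  "Rad_words n \<delta> = {u. rho n \<delta> u \<in> jac_rad (n - 1) (Ralg n \<delta>)}"

text \<open>A Wedderburn--Artin decomposition: the maps f i (i < k) are the components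
  phi_i o psi of a surjective unital C-algebra homomorphism
  R \<rightarrow> M_{ns 0}(C) x ... x M_{ns (k-1)}(C) whose kernel is Rad(R).\<close>
definition WA_decomp :: "nat \<Rightarrow> (nat \<Rightarrow> 'a \<Rightarrow> nat) \<Rightarrow> nat \<Rightarrow> (nat \<Rightarrow> nat)
    \<Rightarrow> (nat \<Rightarrow> complex mat \<Rightarrow> complex mat) \<Rightarrow> bool" where
  "WA_decomp n \<delta> k ns f \<longleftrightarrow>
    (let d = n - 1; R = Ralg n \<delta> in
      (\<forall>i<k. 0 < ns i) \<and>
      (\<forall>i<k. \<forall>x\<in>R. f i x \<in> carrier_mat (ns i) (ns i)) \<and>
      (\<forall>i<k. \<forall>x\<in>R. \<forall>y\<in>R. f i (x + y) = f i x + f i y \<and> f i (x * y) = f i x * f i y) \<and>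
      (\<forall>i<k. \<forall>c. \<forall>x\<in>R. f i (c \<cdot>\<^sub>m x) = c \<cdot>\<^sub>m f i x) \<and>
      (\<forall>i<k. f i (1\<^sub>m d) = 1\<^sub>m (ns i)) \<and>
      (\<forall>g. (\<forall>i<k. g i \<in> carrier_mat (ns i) (ns i)) \<longrightarrow> (\<exists>x\<in>R. \<forall>i<k. f i x = g i)) \<and>
      (\<forall>x\<in>R. (\<forall>i<k. f i x = 0\<^sub>m (ns i) (ns i)) \<longleftrightarrow> x \<in> jac_rad d R))"

definition theta :: "nat \<Rightarrow> (nat \<Rightarrow> 'a \<Rightarrow> nat) \<Rightarrow> (complex mat \<Rightarrow> complex mat)
    \<Rightarrow> 'a list \<Rightarrow> complex mat" where
  "theta n \<delta> fi u = fi (rho n \<delta> u)"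

definition Mon :: "nat \<Rightarrow> (nat \<Rightarrow> 'a \<Rightarrow> nat) \<Rightarrow> (complex mat \<Rightarrow> complex mat) \<Rightarrow> complex mat set" where
  "Mon n \<delta> fi = range (theta n \<delta> fi)"

definition monoid_ideal :: "complex mat set \<Rightarrow> complex mat set \<Rightarrow> bool" where
  "monoid_ideal M J \<longleftrightarrow> J \<subseteq> M \<and> J \<noteq> {} \<and> (\<forall>s\<in>M. \<forall>x\<in>J. s * x \<in> J \<and> x * s \<in> J)"

definition zero_minimal_ideal :: "complex mat set \<Rightarrow> complex mat \<Rightarrow> complex mat set \<Rightarrow> bool" where
  "zero_minimal_ideal M z I \<longleftrightarrow> monoid_ideal M I \<and> I \<noteq> {z} \<and>
     (\<forall>J. monoid_ideal M J \<and> J \<subseteq> I \<longrightarrow> J = {z} \<or> J = I)"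

definition Rnk_elem :: "nat \<Rightarrow> (nat \<Rightarrow> 'a \<Rightarrow> nat) \<Rightarrow> (complex mat \<Rightarrow> complex mat)
    \<Rightarrow> complex mat \<Rightarrow> nat" where
  "Rnk_elem n \<delta> fi g = Inf {rk n \<delta> u | u. theta n \<delta> fi u = g}"

definition Rnk_ideal :: "nat \<Rightarrow> (nat \<Rightarrow> 'a \<Rightarrow> nat) \<Rightarrow> (complex mat \<Rightarrow> complex mat)
    \<Rightarrow> nat \<Rightarrow> complex mat set \<Rightarrow> nat" where
  "Rnk_ideal n \<delta> fi m I = Inf {Rnk_elem n \<delta> fi g | g. g \<in> I - {0\<^sub>m m m}}"

end

theory Submission
  imports Defs
begin

lemma act_append: "act \<delta> q (u @ v) = act \<delta> (act \<delta> q u) v"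
  by (simp add: act_def)

lemma act_Nil[simp]: "act \<delta> q [] = q"
  by (simp add: act_def)

lemma act_lt: assumes "\<forall>q<n. \<forall>a. \<delta> q a < n" "q < n" shows "act \<delta> q w < n"
  using assms(2)
proof (induction w arbitrary: q)
  case Nil then show ?case by simp
next
  case (Cons a w)
  have "act \<delta> q (a # w) = act \<delta> (\<delta> q a) w" by (simp add: act_def)
  then show ?case using Cons assms(1) by simp
qed

lemma rho_carrier[simp]: "rho n \<delta> u \<in> carrier_mat (n - 1) (n - 1)"
  by (simp add: rho_def)

lemma rho_carrier'[simp]: "rho n \<delta> u \<in> carrier_mat (n - Suc 0) (n - Suc 0)"
  using rho_carrier[of n \<delta> u] by simp

lemma rho_Nil: "rho n \<delta> [] = 1\<^sub>m (n - 1)"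
  by (rule eq_matI) (auto simp: rho_def)

lemma sum_delta_h:
  fixes h :: "nat \<Rightarrow> complex"
  assumes "c < n" "h (n - 1) = 0"
  shows "(\<Sum>m\<in>{0..<n - 1}. h m * (if m = c then 1 else 0)) = h c"
proof (cases "c < n - 1")
  case True
  have "(\<Sum>m\<in>{0..<n - 1}. h m * (if m = c then 1 else 0)) = (\<Sum>m\<in>{0..<n - 1}. if m = c then h m else 0)"
    by (rule sum.cong) auto
  also have "\<dots> = h c" using True by (simp add: sum.delta')
  finally show ?thesis .
next
  case False
  then have "c = n - 1" using assms by auto
  have "(\<Sum>m\<in>{0..<n - 1}. h m * (if m = c then 1 else 0)) = (\<Sum>m\<in>{0..<n - 1}. 0)"
    by (rule sum.cong) (use False in auto)
  then show ?thesis using assms \<open>c = n - 1\<close> by simp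
qed

lemma rho_append:
  assumes cl: "\<forall>q<n. \<forall>a. \<delta> q a < n" and n: "1 \<le> n"
  shows "rho n \<delta> (u @ v) = rho n \<delta> v * rho n \<delta> u"
proof (rule eq_matI)
  fix i j assume i: "i < dim_row (rho n \<delta> v * rho n \<delta> u)" and j: "j < dim_col (rho n \<delta> v * rho n \<delta> u)"
  then have i': "i < n - 1" and j': "j < n - 1" by (auto simp: rho_def)
  define h :: "nat \<Rightarrow> complex" where
    "h = (\<lambda>m. (if i = act \<delta> m v then 1 else 0) - (if i = act \<delta> (n - 1) v then 1 else 0))"
  define a where "a = act \<delta> j u"
  define b where "b = act \<delta> (n - 1) u"
  have a: "a < n" unfolding a_def using act_lt[OF cl] j' by simp
  have b: "b < n" unfolding b_def using act_lt[OF cl] n by simp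
  have h0: "h (n - 1) = 0" by (simp add: h_def)
  have "(rho n \<delta> v * rho n \<delta> u) $$ (i, j) =
     (\<Sum>m\<in>{0..<n - 1}. h m * ((if m = a then 1 else 0) - (if m = b then 1 else 0)))"
    using i' j' by (simp add: rho_def scalar_prod_def h_def a_def b_def)
  also have "\<dots> = (\<Sum>m\<in>{0..<n - 1}. h m * (if m = a then 1 else 0)) - (\<Sum>m\<in>{0..<n - 1}. h m * (if m = b then 1 else 0))"
    by (simp add: right_diff_distrib sum_subtractf)
  also have "\<dots> = h a - h b" using sum_delta_h[of a n h, OF a h0] sum_delta_h[of b n h, OF b h0] by simp
  also have "\<dots> = rho n \<delta> (u @ v) $$ (i, j)"
    using i' j' by (simp add: rho_def h_def a_def b_def act_append)
  finally show "rho n \<delta> (u @ v) $$ (i, j) = (rho n \<delta> v * rho n \<delta> u) $$ (i, j)" by simp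
qed (auto simp: rho_def)

lemma alg_gen_carrier: "x \<in> alg_gen d S \<Longrightarrow> S \<subseteq> carrier_mat d d \<Longrightarrow> x \<in> carrier_mat d d"
  by (induction rule: alg_gen.induct) auto

lemma Ralg_carrier: "x \<in> Ralg n \<delta> \<Longrightarrow> x \<in> carrier_mat (n - 1) (n - 1)"
  unfolding Ralg_def by (erule alg_gen_carrier) auto

inductive_set wspan :: "nat \<Rightarrow> (nat \<Rightarrow> 'a \<Rightarrow> nat) \<Rightarrow> complex mat set"
  for n :: nat and \<delta> :: "nat \<Rightarrow> 'a \<Rightarrow> nat" where
  w_rho: "rho n \<delta> w \<in> wspan n \<delta>"
| w_zero: "0\<^sub>m (n - 1) (n - 1) \<in> wspan n \<delta>"
| w_add: "x \<in> wspan n \<delta> \<Longrightarrow> y \<in> wspan n \<delta> \<Longrightarrow> x + y \<in> wspan n \<delta>"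
| w_smult: "x \<in> wspan n \<delta> \<Longrightarrow> c \<cdot>\<^sub>m x \<in> wspan n \<delta>"

lemma wspan_carrier: "x \<in> wspan n \<delta> \<Longrightarrow> x \<in> carrier_mat (n - 1) (n - 1)"
  by (induction rule: wspan.induct) auto

lemma wspan_Ralg: "x \<in> wspan n \<delta> \<Longrightarrow> x \<in> Ralg n \<delta>"
  unfolding Ralg_def
  by (induction rule: wspan.induct) (auto intro: alg_gen.intros)

lemma wspan_mult:
  assumes cl: "\<forall>q<n. \<forall>a. \<delta> q a < n" and n: "1 \<le> n"
  assumes x: "x \<in> wspan n \<delta>" and y: "y \<in> wspan n \<delta>"
  shows "x * y \<in> wspan n \<delta>"
  using x y
proof (induction x arbitrary: y rule: wspan.induct)
  case (w_rho w)
  show ?case using w_rho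
  proof (induction y rule: wspan.induct)
    case (w_rho w')
    then show ?case using rho_append[OF cl n, of w' w] wspan.w_rho by metis
  next
    case w_zero
    have "rho n \<delta> w * 0\<^sub>m (n - 1) (n - 1) = 0\<^sub>m (n - 1) (n - 1)"
      by (rule right_mult_zero_mat) simp
    then show ?case using wspan.w_zero[of n \<delta>] by simp
  next
    case (w_add y1 y2)
    have "rho n \<delta> w * (y1 + y2) = rho n \<delta> w * y1 + rho n \<delta> w * y2"
      by (rule mult_add_distrib_mat[OF rho_carrier wspan_carrier wspan_carrier]) (use w_add in auto)
    then show ?case using w_add wspan.w_add by metis
  next
    case (w_smult y c)
    have "rho n \<delta> w * (c \<cdot>\<^sub>m y) = c \<cdot>\<^sub>m (rho n \<delta> w * y)"
      by (rule mult_smult_distrib[OF rho_carrier wspan_carrier]) (use w_smult in auto)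
    then show ?case using w_smult wspan.w_smult by metis
  qed
next
  case w_zero
  have "0\<^sub>m (n - 1) (n - 1) * y = 0\<^sub>m (n - 1) (n - 1)"
    by (rule left_mult_zero_mat[OF wspan_carrier[OF w_zero(1)]])
  then show ?case using wspan.w_zero by metis
next
  case (w_add x1 x2)
  have "(x1 + x2) * y = x1 * y + x2 * y"
    by (rule add_mult_distrib_mat[OF wspan_carrier wspan_carrier wspan_carrier]) (use w_add in auto)
  then show ?case using w_add wspan.w_add by metis
next
  case (w_smult x c)
  have "(c \<cdot>\<^sub>m x) * y = c \<cdot>\<^sub>m (x * y)"
    by (rule mult_smult_assoc_mat[OF wspan_carrier wspan_carrier]) (use w_smult in auto)
  then show ?case using w_smult wspan.w_smult by metis
qed

lemma Ralg_wspan: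
  assumes cl: "\<forall>q<n. \<forall>a. \<delta> q a < n" and n: "1 \<le> n"
  shows "x \<in> Ralg n \<delta> \<Longrightarrow> x \<in> wspan n \<delta>"
  unfolding Ralg_def
proof (induction rule: alg_gen.induct)
  case (gen x) then show ?case by (auto intro: wspan.w_rho)
next
  case one then show ?case using rho_Nil wspan.w_rho by metis
next
  case zero then show ?case by (rule wspan.w_zero)
next
  case (add x y) then show ?case by (blast intro: wspan.w_add)
next
  case (mult x y) then show ?case by (blast intro: wspan_mult[OF cl n])
next
  case (smult x c) then show ?case by (blast intro: wspan.w_smult)
qed

lemma zero_smult_carrier: "(X :: complex mat) \<in> carrier_mat m m \<Longrightarrow> 0 \<cdot>\<^sub>m X = 0\<^sub>m m m"
  by (rule eq_matI) auto

lemma prime_mat: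
  fixes t a :: "complex mat"
  assumes t: "t \<in> carrier_mat m m" and a: "a \<in> carrier_mat m m"
    and t0: "t \<noteq> 0\<^sub>m m m" and a0: "a \<noteq> 0\<^sub>m m m"
  shows "\<exists>X\<in>carrier_mat m m. t * X * a \<noteq> 0\<^sub>m m m"
proof -
  obtain p q where pq: "p < m" "q < m" "t $$ (p, q) \<noteq> 0"
  proof -
    have "\<exists>p q. p < m \<and> q < m \<and> t $$ (p, q) \<noteq> 0"
    proof (rule ccontr)
      assume "\<not> ?thesis"
      then have "t = 0\<^sub>m m m" using t by (intro eq_matI) auto
      then show False using t0 by simp
    qed
    then show ?thesis using that by blast
  qed
  obtain r s where rs: "r < m" "s < m" "a $$ (r, s) \<noteq> 0"
  proof -
    have "\<exists>p q. p < m \<and> q < m \<and> a $$ (p, q) \<noteq> 0"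
    proof (rule ccontr)
      assume "\<not> ?thesis"
      then have "a = 0\<^sub>m m m" using a by (intro eq_matI) auto
      then show False using a0 by simp
    qed
    then show ?thesis using that by blast
  qed
  define X :: "complex mat" where "X = mat m m (\<lambda>(x, y). if x = q \<and> y = r then 1 else 0)"
  have X: "X \<in> carrier_mat m m" by (simp add: X_def)
  have tX: "\<And>j. j < m \<Longrightarrow> (t * X) $$ (p, j) = (if j = r then t $$ (p, q) else 0)"
  proof -
    fix j assume j: "j < m"
    have "(t * X) $$ (p, j) = (\<Sum>l\<in>{0..<m}. t $$ (p, l) * (if l = q \<and> j = r then 1 else 0))"
      using t pq j by (simp add: X_def scalar_prod_def)
    also have "\<dots> = (\<Sum>l\<in>{0..<m}. if l = q then (if j = r then t $$ (p, l) else 0) else 0)"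
      by (rule sum.cong) auto
    also have "\<dots> = (if j = r then t $$ (p, q) else 0)" using pq by (simp add: sum.delta')
    finally show "(t * X) $$ (p, j) = (if j = r then t $$ (p, q) else 0)" .
  qed
  have "(t * X * a) $$ (p, s) = row (t * X) p \<bullet> col a s"
    by (rule index_mult_mat(1)) (use t X a pq rs in auto)
  also have "\<dots> = (\<Sum>j\<in>{0..<m}. if j = r then t $$ (p, q) * a $$ (r, s) else 0)"
    unfolding scalar_prod_def
  proof (rule sum.cong)
    show "{0..<dim_vec (col a s)} = {0..<m}" using a by simp
    fix j assume "j \<in> {0..<m}"
    then have j: "j < m" by simp
    have e1: "row (t * X) p $ j = (t * X) $$ (p, j)" using t X j pq by (intro index_row) auto
    have e2: "col a s $ j = a $$ (j, s)" using a j rs by simp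
    show "row (t * X) p $ j * col a s $ j = (if j = r then t $$ (p, q) * a $$ (r, s) else 0)"
      unfolding e1 e2 tX[OF j] by simp
  qed
  also have "\<dots> = t $$ (p, q) * a $$ (r, s)" using rs by (simp add: sum.delta')
  finally have "(t * X * a) $$ (p, s) \<noteq> 0" using pq rs by simp
  then have "t * X * a \<noteq> 0\<^sub>m m m" using pq rs by auto
  then show ?thesis using X by blast
qed

lemma reset_rho:
  assumes "is_reset n \<delta> u" "1 \<le> n"
  shows "rho n \<delta> u = 0\<^sub>m (n - 1) (n - 1)"
proof -
  have "card ((\<lambda>q. act \<delta> q u) ` {..<n}) = 1" using assms by (simp add: is_reset_def rk_def)
  then obtain c where c: "(\<lambda>q. act \<delta> q u) ` {..<n} = {c}" by (meson card_1_singletonE)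
  have "\<And>j. j < n \<Longrightarrow> act \<delta> j u = c" using c by blast
  then show ?thesis using assms(2) by (intro eq_matI) (auto simp: rho_def)
qed

lemma rk_prefix:
  assumes cl: "\<forall>q<n. \<forall>a. \<delta> q a < n"
  shows "rk n \<delta> (p @ u) \<le> rk n \<delta> u"
proof -
  have "(\<lambda>q. act \<delta> q (p @ u)) ` {..<n} \<subseteq> (\<lambda>q. act \<delta> q u) ` {..<n}"
    using act_lt[OF cl] by (auto simp: act_append)
  then show ?thesis unfolding rk_def by (intro card_mono) auto
qed

theorem mainTheorem2:
  fixes \<delta> :: "nat \<Rightarrow> 'a::finite \<Rightarrow> nat" and n k :: nat and ns :: "nat \<Rightarrow> nat"
    and f :: "nat \<Rightarrow> complex mat \<Rightarrow> complex mat" and I :: "nat \<Rightarrow> complex mat set"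
  assumes "2 \<le> n"
    and "\<forall>q<n. \<forall>a. \<delta> q a < n"
    and "synchronizing n \<delta>"
    and "WA_decomp n \<delta> k ns f"
    and "\<forall>i<k. zero_minimal_ideal (Mon n \<delta> (f i)) (0\<^sub>m (ns i) (ns i)) (I i)"
  shows "Fr n \<delta> \<le> Inf {Rnk_ideal n \<delta> (f i) (ns i) (I i) | i. i < k}
    \<and> (Fs n \<delta> - Rad_words n \<delta> \<noteq> {} \<longrightarrow>
         Inf {Rnk_ideal n \<delta> (f i) (ns i) (I i) | i. i < k} = Fr n \<delta>)"
proof -
  define d where "d = n - 1"
  define R where "R = Ralg n \<delta>"
  have n1: "1 \<le> n" and d1: "1 \<le> d" using assms(1) by (auto simp: d_def)
  have cl: "\<forall>q<n. \<forall>a. \<delta> q a < n" by (fact assms(2))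
  have W1: "\<forall>i<k. \<forall>x\<in>R. f i x \<in> carrier_mat (ns i) (ns i)"
   and W2: "\<forall>i<k. \<forall>x\<in>R. \<forall>y\<in>R. f i (x + y) = f i x + f i y \<and> f i (x * y) = f i x * f i y"
   and W3: "\<forall>i<k. \<forall>c. \<forall>x\<in>R. f i (c \<cdot>\<^sub>m x) = c \<cdot>\<^sub>m f i x"
   and W5: "\<forall>g. (\<forall>i<k. g i \<in> carrier_mat (ns i) (ns i)) \<longrightarrow> (\<exists>x\<in>R. \<forall>i<k. f i x = g i)"
   and W6: "\<forall>x\<in>R. (\<forall>i<k. f i x = 0\<^sub>m (ns i) (ns i)) \<longleftrightarrow> x \<in> jac_rad d R"
    using assms(4) unfolding WA_decomp_def Let_def R_def d_def by blast+
  have rhoR: "\<And>w. rho n \<delta> w \<in> R" unfolding R_def Ralg_def by (auto intro: alg_gen.gen)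
  have zeroR: "0\<^sub>m d d \<in> R" unfolding R_def Ralg_def d_def by (rule alg_gen.zero)
  have oneR: "1\<^sub>m d \<in> R" unfolding R_def Ralg_def d_def by (rule alg_gen.one)
  have Rcar: "\<And>x. x \<in> R \<Longrightarrow> x \<in> carrier_mat d d" unfolding R_def d_def by (rule Ralg_carrier)
  have f0: "\<And>i. i < k \<Longrightarrow> f i (0\<^sub>m d d) = 0\<^sub>m (ns i) (ns i)"
  proof -
    fix i assume i: "i < k"
    have "f i (0\<^sub>m d d) = f i (0 \<cdot>\<^sub>m 0\<^sub>m d d)" by simp
    also have "\<dots> = 0 \<cdot>\<^sub>m f i (0\<^sub>m d d)" using W3 i zeroR by blast
    also have "\<dots> = 0\<^sub>m (ns i) (ns i)" using W1 i zeroR zero_smult_carrier by blast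
    finally show "f i (0\<^sub>m d d) = 0\<^sub>m (ns i) (ns i)" .
  qed
  have thcar: "\<And>i w. i < k \<Longrightarrow> theta n \<delta> (f i) w \<in> carrier_mat (ns i) (ns i)"
    unfolding theta_def using W1 rhoR by blast
  have thapp: "\<And>i u v. i < k \<Longrightarrow> theta n \<delta> (f i) (u @ v) = theta n \<delta> (f i) v * theta n \<delta> (f i) u"
    unfolding theta_def using W2 rhoR rho_append[OF cl n1] by metis
  have threset: "\<And>i w. i < k \<Longrightarrow> is_reset n \<delta> w \<Longrightarrow> theta n \<delta> (f i) w = 0\<^sub>m (ns i) (ns i)"
    unfolding theta_def using reset_rho n1 f0 d_def by metis
  have Frle: "\<And>w. \<not> is_reset n \<delta> w \<Longrightarrow> Fr n \<delta> \<le> rk n \<delta> w"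
    unfolding Fr_def by (rule cInf_lower) (auto intro: bdd_below_bot)
  have k0: "0 < k"
  proof (rule ccontr)
    assume "\<not> 0 < k"
    then have "1\<^sub>m d \<in> jac_rad d R" using W6 oneR by auto
    then obtain z where z: "z \<in> R" "z * (1\<^sub>m d - 1\<^sub>m d * 1\<^sub>m d) = 1\<^sub>m d"
      unfolding jac_rad_def using oneR by blast
    have e: "1\<^sub>m d - 1\<^sub>m d * 1\<^sub>m d = (0\<^sub>m d d :: complex mat)" by (rule eq_matI) auto
    have "z * (1\<^sub>m d - 1\<^sub>m d * 1\<^sub>m d) = z * 0\<^sub>m d d" by (simp only: e)
    also have "\<dots> = 0\<^sub>m d d" using Rcar[OF z(1)] by (rule right_mult_zero_mat)
    finally have "z * (1\<^sub>m d - 1\<^sub>m d * 1\<^sub>m d) = 0\<^sub>m d d" .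
    then have "(0\<^sub>m d d :: complex mat) $$ (0, 0) = 1\<^sub>m d $$ (0, 0)" using z by simp
    then show False using d1 by simp
  qed
  have Rnk_ge: "\<And>i. i < k \<Longrightarrow> Fr n \<delta> \<le> Rnk_ideal n \<delta> (f i) (ns i) (I i)"
  proof -
    fix i assume i: "i < k"
    have zm: "zero_minimal_ideal (Mon n \<delta> (f i)) (0\<^sub>m (ns i) (ns i)) (I i)" using assms(5) i by blast
    then have Isub: "I i \<subseteq> Mon n \<delta> (f i)" and Ine: "I i \<noteq> {}" and Inz: "I i \<noteq> {0\<^sub>m (ns i) (ns i)}"
      unfolding zero_minimal_ideal_def monoid_ideal_def by auto
    obtain g where g: "g \<in> I i" "g \<noteq> 0\<^sub>m (ns i) (ns i)" using Ine Inz by blast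
    have elem: "\<And>g. g \<in> I i \<Longrightarrow> g \<noteq> 0\<^sub>m (ns i) (ns i) \<Longrightarrow> Fr n \<delta> \<le> Rnk_elem n \<delta> (f i) g"
    proof -
      fix g assume g: "g \<in> I i" "g \<noteq> 0\<^sub>m (ns i) (ns i)"
      then obtain w0 where w0: "theta n \<delta> (f i) w0 = g" using Isub unfolding Mon_def by blast
      show "Fr n \<delta> \<le> Rnk_elem n \<delta> (f i) g"
        unfolding Rnk_elem_def
      proof (rule cInf_greatest)
        show "{rk n \<delta> u |u. theta n \<delta> (f i) u = g} \<noteq> {}" using w0 by blast
      next
        fix x assume "x \<in> {rk n \<delta> u |u. theta n \<delta> (f i) u = g}"
        then obtain w where w: "x = rk n \<delta> w" "theta n \<delta> (f i) w = g" by blast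
        have "\<not> is_reset n \<delta> w" using threset[OF i] w g by metis
        then show "Fr n \<delta> \<le> x" using Frle w by simp
      qed
    qed
    show "Fr n \<delta> \<le> Rnk_ideal n \<delta> (f i) (ns i) (I i)"
      unfolding Rnk_ideal_def
    proof (rule cInf_greatest)
      show "{Rnk_elem n \<delta> (f i) g |g. g \<in> I i - {0\<^sub>m (ns i) (ns i)}} \<noteq> {}" using g by blast
    next
      fix x assume "x \<in> {Rnk_elem n \<delta> (f i) g |g. g \<in> I i - {0\<^sub>m (ns i) (ns i)}}"
      then show "Fr n \<delta> \<le> x" using elem by blast
    qed
  qed
  have part1: "Fr n \<delta> \<le> Inf {Rnk_ideal n \<delta> (f i) (ns i) (I i) | i. i < k}"
  proof (rule cInf_greatest)
    show "{Rnk_ideal n \<delta> (f i) (ns i) (I i) | i. i < k} \<noteq> {}" using k0 by blast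
  next
    fix x assume "x \<in> {Rnk_ideal n \<delta> (f i) (ns i) (I i) | i. i < k}"
    then show "Fr n \<delta> \<le> x" using Rnk_ge by blast
  qed
  have part2: "Inf {Rnk_ideal n \<delta> (f i) (ns i) (I i) | i. i < k} \<le> Fr n \<delta>"
    if ne: "Fs n \<delta> - Rad_words n \<delta> \<noteq> {}"
  proof -
    obtain u where u: "rk n \<delta> u = Fr n \<delta>" "rho n \<delta> u \<notin> jac_rad d R"
      using ne unfolding Fs_def Rad_words_def R_def d_def by blast
    obtain i where i: "i < k" "f i (rho n \<delta> u) \<noteq> 0\<^sub>m (ns i) (ns i)"
      using W6 rhoR u(2) by blast
    define t where "t = theta n \<delta> (f i) u"
    have t0: "t \<noteq> 0\<^sub>m (ns i) (ns i)" using i by (simp add: t_def theta_def)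
    have zm: "zero_minimal_ideal (Mon n \<delta> (f i)) (0\<^sub>m (ns i) (ns i)) (I i)" using assms(5) i by blast
    then have Isub: "I i \<subseteq> Mon n \<delta> (f i)" and Ine: "I i \<noteq> {}" and Inz: "I i \<noteq> {0\<^sub>m (ns i) (ns i)}"
      and Iid: "\<forall>s\<in>Mon n \<delta> (f i). \<forall>x\<in>I i. s * x \<in> I i \<and> x * s \<in> I i"
      unfolding zero_minimal_ideal_def monoid_ideal_def by auto
    obtain a where a: "a \<in> I i" "a \<noteq> 0\<^sub>m (ns i) (ns i)" using Ine Inz by blast
    then obtain v where v: "theta n \<delta> (f i) v = a" using Isub unfolding Mon_def by blast
    have acar: "a \<in> carrier_mat (ns i) (ns i)" using thcar[OF i(1)] v by metis
    have tcar: "t \<in> carrier_mat (ns i) (ns i)" using thcar[OF i(1)] t_def by metis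
    obtain x where x: "t * theta n \<delta> (f i) x * a \<noteq> 0\<^sub>m (ns i) (ns i)"
    proof (rule ccontr)
      assume "\<not> thesis"
      then have H: "\<And>x. t * theta n \<delta> (f i) x * a = 0\<^sub>m (ns i) (ns i)" using that by blast
      have Wz: "\<And>r. r \<in> wspan n \<delta> \<Longrightarrow> t * f i r * a = 0\<^sub>m (ns i) (ns i)"
      proof -
        fix r assume "r \<in> wspan n \<delta>"
        then show "t * f i r * a = 0\<^sub>m (ns i) (ns i)"
        proof (induction rule: wspan.induct)
          case (w_rho w) then show ?case using H by (simp add: theta_def)
        next
          case w_zero then show ?case using f0[OF i(1)] tcar acar d_def by simp
        next
          case (w_add x y)
          have xR: "x \<in> R" and yR: "y \<in> R" using w_add wspan_Ralg R_def by auto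
          have fx: "f i x \<in> carrier_mat (ns i) (ns i)" and fy: "f i y \<in> carrier_mat (ns i) (ns i)"
            using W1 i xR yR by auto
          have "t * f i (x + y) * a = t * (f i x + f i y) * a" using W2 i xR yR by simp
          also have "\<dots> = (t * f i x + t * f i y) * a" using tcar fx fy by (simp add: mult_add_distrib_mat)
          also have "\<dots> = t * f i x * a + t * f i y * a"
            using tcar fx fy acar by (simp add: add_mult_distrib_mat[of _ "ns i" "ns i"])
          finally show ?case using w_add by simp
        next
          case (w_smult x c)
          have xR: "x \<in> R" using w_smult wspan_Ralg R_def by auto
          have fx: "f i x \<in> carrier_mat (ns i) (ns i)" using W1 i xR by auto
          have "t * f i (c \<cdot>\<^sub>m x) * a = t * (c \<cdot>\<^sub>m f i x) * a" using W3 i xR by simp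
          also have "\<dots> = c \<cdot>\<^sub>m (t * f i x * a)"
            using tcar fx acar by (simp add: mult_smult_distrib[of _ "ns i" "ns i"] mult_smult_assoc_mat[of _ "ns i" "ns i"])
          finally show ?case using w_smult by simp
        qed
      qed
      obtain X where X: "X \<in> carrier_mat (ns i) (ns i)" "t * X * a \<noteq> 0\<^sub>m (ns i) (ns i)"
        using prime_mat[OF tcar acar t0 a(2)] by blast
      define g where "g = (\<lambda>j. if j = i then X else 0\<^sub>m (ns j) (ns j))"
      have gc: "\<forall>j<k. g j \<in> carrier_mat (ns j) (ns j)" using X(1) unfolding g_def by auto
      obtain r where r: "r \<in> R" "\<forall>j<k. f j r = g j"
        using W5 gc by blast
      have "f i r = X" using r i by (simp add: g_def)
      moreover have "r \<in> wspan n \<delta>" using r(1) Ralg_wspan[OF cl n1] R_def by blast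
      ultimately show False using Wz X(2) by metis
    qed
    define w where "w = v @ x @ u"
    have thw: "theta n \<delta> (f i) w = t * theta n \<delta> (f i) x * a"
      unfolding w_def t_def using thapp[OF i(1)] v by metis
    have Xcar: "theta n \<delta> (f i) x \<in> carrier_mat (ns i) (ns i)" using thcar[OF i(1)] by blast
    have "t * theta n \<delta> (f i) x * a = t * (theta n \<delta> (f i) x * a)"
      using tcar Xcar acar by (simp add: assoc_mult_mat[of _ "ns i" "ns i"])
    moreover have "theta n \<delta> (f i) x * a \<in> I i" using Iid a(1) unfolding Mon_def by blast
    moreover have "t \<in> Mon n \<delta> (f i)" unfolding Mon_def t_def by blast
    ultimately have wI: "theta n \<delta> (f i) w \<in> I i" using Iid thw by metis
    have rkw: "rk n \<delta> w \<le> Fr n \<delta>" unfolding w_def using rk_prefix[OF cl, of "v @ x" u] u(1) by simp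
    have "Rnk_elem n \<delta> (f i) (theta n \<delta> (f i) w) \<le> rk n \<delta> w"
      unfolding Rnk_elem_def by (rule cInf_lower) (auto intro: bdd_below_bot)
    moreover have "Rnk_ideal n \<delta> (f i) (ns i) (I i) \<le> Rnk_elem n \<delta> (f i) (theta n \<delta> (f i) w)"
      unfolding Rnk_ideal_def by (rule cInf_lower) (use wI thw x in \<open>auto intro: bdd_below_bot\<close>)
    moreover have "Inf {Rnk_ideal n \<delta> (f i) (ns i) (I i) | i. i < k} \<le> Rnk_ideal n \<delta> (f i) (ns i) (I i)"
      by (rule cInf_lower) (use i in \<open>auto intro: bdd_below_bot\<close>)
    ultimately show ?thesis using rkw by linarith
  qed
  show ?thesis using part1 part2 by (auto intro: antisym)
qed

end
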